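(* For any ideal $\mathcal{I}$: (a) if $\mathcal{I}$ is a hereditary weak P-ideal then $\mathcal{I}$ is unboring, and if $\mathcal{I}$ is unboring then $\mathcal{I}$ is a weak P-ideal (equivalently: $\mathrm{Fin}^2\sqsubseteq\mathcal{I}\implies\mathcal{BI}\sqsubseteq\mathcal{I}\implies(\exists A\notin\mathcal{I})\ \mathrm{Fin}^2\sqsubseteq\mathcal{I}|A$); (b) neither of the two implications in (a) can be reversed in general (i.e., there is an unboring ideal which is not a hereditary weak P-ideal, and a weak P-ideal which is boring); (c) if $\mathcal{I}$ is contained in some unboring ideal then $\mathcal{I}$ is unboring; in particular, if $\mathcal{I}$ is contained in some hereditary weak P-ideal then $\mathcal{I}$ is unboring.
   Context: An ideal on an infinite countable set $X$ is a family $\mathcal{I}\subseteq\mathcal{P}(X)$ closed under subsets and finite unions, containing all finite subsets, with $X\notin\mathcal{I}$. $\mathcal{I}|A=\{B\cap A:B\in\mathcal{I}\}$. $\mathrm{Fin}^2$: ideal on $\omega^2$ of all $A$ with only finitely many $n$ such that $\{m:(n,m)\in A\}$ is infinite. $\mathcal{BI}$: ideal on $\omega^3$ of all $A$ for which there is $k$ with $\{(j,l):(i,j,l)\in A\}\in\mathrm{Fin}^2$ for $i<k$ and finite for $i\ge k$. $\mathcal{I}\sqsubseteq\mathcal{J}$: there is a bijection $f:\bigcup\mathcal{J}\to\bigcup\mathcal{I}$ with $f^{-1}[A]\in\mathcal{J}$ for all $A\in\mathcal{I}$. $\mathcal{I}$ is boring if $\mathcal{BI}\sqsubseteq\mathcal{I}$,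 unboring otherwise. $\mathcal{I}$ is a weak P-ideal if $\mathrm{Fin}^2\not\sqsubseteq\mathcal{I}$ (equivalently, every partition of $\bigcup\mathcal{I}$ into countably many sets from $\mathcal{I}$ admits $S\notin\mathcal{I}$ meeting each piece in a finite set), and a hereditary weak P-ideal if $\mathrm{Fin}^2\not\sqsubseteq\mathcal{I}|A$ for every $A\notin\mathcal{I}$. *)

theory Defs
  imports Main "HOL-Library.Countable_Set"
begin

definition ideal_on :: "'a set \<Rightarrow> 'a set set \<Rightarrow> bool" where
  "ideal_on X I \<longleftrightarrow> infinite X \<and> countable X \<and> I \<subseteq> Pow X
     \<and> (\<forall>A\<in>I. \<forall>B. B \<subseteq> A \<longrightarrow> B \<in> I)
     \<and> (\<forall>A\<in>I. \<forall>B\<in>I. A \<union> B \<in> I)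
     \<and> (\<forall>F. F \<subseteq> X \<and> finite F \<longrightarrow> F \<in> I)
     \<and> X \<notin> I"

definition restr :: "'a set set \<Rightarrow> 'a set \<Rightarrow> 'a set set" where
  "restr I A = {B \<inter> A | B. B \<in> I}"

definition kat_le :: "'a set set \<Rightarrow> 'b set set \<Rightarrow> bool" where
  "kat_le I J \<longleftrightarrow> (\<exists>f. bij_betw f (\<Union>J) (\<Union>I) \<and> (\<forall>A\<in>I. f -` A \<inter> \<Union>J \<in> J))"

definition Fin2 :: "(nat \<times> nat) set set" where
  "Fin2 = {A. finite {n. infinite {m. (n, m) \<in> A}}}"

definition BI :: "(nat \<times> nat \<times> nat) set set" where
  "BI = {A. \<exists>k. (\<forall>i<k. {(j, l). (i, j, l) \<in> A} \<in> Fin2)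
                 \<and> (\<forall>i\<ge>k. finite {(j, l). (i, j, l) \<in> A})}"

definition boring :: "'a set set \<Rightarrow> bool" where
  "boring I \<longleftrightarrow> kat_le BI I"

definition unboring :: "'a set set \<Rightarrow> bool" where
  "unboring I \<longleftrightarrow> \<not> boring I"

definition weak_P :: "'a set set \<Rightarrow> bool" where
  "weak_P I \<longleftrightarrow> \<not> kat_le Fin2 I"

definition hereditary_weak_P :: "'a set set \<Rightarrow> bool" where
  "hereditary_weak_P I \<longleftrightarrow> (\<forall>A. A \<subseteq> \<Union>I \<and> A \<notin> I \<longrightarrow> \<not> kat_le Fin2 (restr I A))"

end

theory Submission
  imports Defs
begin


lemma Fin2_single: "{x} \<in> Fin2"
  by (cases x) (auto simp: Fin2_def)

lemma Union_Fin2: "\<Union>Fin2 = UNIV"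
  using Fin2_single by blast

lemma finite_in_BI: "finite A \<Longrightarrow> A \<in> BI"
proof -
  assume "finite A"
  have "finite {(j, l). (i, j, l) \<in> A}" for i
  proof -
    have "{(j, l). (i, j, l) \<in> A} \<subseteq> snd ` A" by force
    thus ?thesis using \<open>finite A\<close> finite_subset by blast
  qed
  thus ?thesis unfolding BI_def by (intro CollectI exI[of _ 0]) auto
qed

lemma Union_BI: "\<Union>BI = UNIV"
  using finite_in_BI[of "{x}" for x] by blast

lemma kat_trans: "kat_le A B \<Longrightarrow> kat_le B C \<Longrightarrow> kat_le A C"
proof -
  assume "kat_le A B" "kat_le B C"
  then obtain f g where f: "bij_betw f (\<Union>B) (\<Union>A)" "\<forall>S\<in>A. f -` S \<inter> \<Union>B \<in> B"
    and g: "bij_betw g (\<Union>C) (\<Union>B)" "\<forall>T\<in>B. g -` T \<inter> \<Union>C \<in> C"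
    unfolding kat_le_def by blast
  have "bij_betw (f \<circ> g) (\<Union>C) (\<Union>A)" using f g bij_betw_trans by blast
  moreover have "(f \<circ> g) -` S \<inter> \<Union>C \<in> C" if "S \<in> A" for S
  proof -
    have eq: "(f \<circ> g) -` S \<inter> \<Union>C = g -` (f -` S \<inter> \<Union>B) \<inter> \<Union>C"
    proof -
      have "g ` \<Union>C \<subseteq> \<Union>B" using g(1) by (simp add: bij_betw_def)
      thus ?thesis by (auto simp del: Union_iff) (blast intro: UnionI)
    qed
    have "f -` S \<inter> \<Union>B \<in> B" using f(2) that by (rule bspec)
    hence "g -` (f -` S \<inter> \<Union>B) \<inter> \<Union>C \<in> C" by (rule bspec[OF g(2)])
    thus ?thesis unfolding eq .
  qed
  ultimately show ?thesis unfolding kat_le_def by blast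
qed

lemma kat_mono: "kat_le A I \<Longrightarrow> I \<subseteq> J \<Longrightarrow> \<Union>I = \<Union>J \<Longrightarrow> kat_le A J"
proof -
  assume "kat_le A I" and IJ: "I \<subseteq> J" and U: "\<Union>I = \<Union>J"
  then obtain f where f: "bij_betw f (\<Union>I) (\<Union>A)" "\<forall>S\<in>A. f -` S \<inter> \<Union>I \<in> I"
    unfolding kat_le_def by blast
  have "bij_betw f (\<Union>J) (\<Union>A)" using f(1) U by simp
  moreover have "\<forall>S\<in>A. f -` S \<inter> \<Union>J \<in> J" using f(2) IJ U by auto
  ultimately show ?thesis unfolding kat_le_def by blast
qed

lemma UNIV_not_Fin2: "(UNIV :: (nat\<times>nat) set) \<notin> Fin2"
  by (simp add: Fin2_def infinite_UNIV_nat)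

lemma infinite_UNIV_nn: "infinite (UNIV :: (nat\<times>nat) set)"
  by (simp add: finite_prod infinite_UNIV_nat)

lemma UNIV_not_BI: "(UNIV :: (nat\<times>nat\<times>nat) set) \<notin> BI"
proof
  assume "(UNIV :: (nat\<times>nat\<times>nat) set) \<in> BI"
  then obtain k where k: "\<forall>i<k. {(j, l). (i, j, l) \<in> (UNIV :: (nat\<times>nat\<times>nat) set)} \<in> Fin2"
      "\<forall>i\<ge>k. finite {(j, l). (i, j, l) \<in> (UNIV :: (nat\<times>nat\<times>nat) set)}"
    unfolding BI_def by blast
  have e: "{(j, l). ((0::nat), j, l) \<in> (UNIV :: (nat\<times>nat\<times>nat) set)} = UNIV" by auto
  show False
  proof (cases "0 < k")
    case True
    hence "{(j, l). ((0::nat), j, l) \<in> (UNIV :: (nat\<times>nat\<times>nat) set)} \<in> Fin2" using k(1) by blast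
    thus False unfolding e using UNIV_not_Fin2 by simp
  next
    case False
    hence "finite {(j, l). ((0::nat), j, l) \<in> (UNIV :: (nat\<times>nat\<times>nat) set)}" using k(2) by simp
    thus False unfolding e using infinite_UNIV_nn by simp
  qed
qed

lemma BI_Fin2: "kat_le BI Fin2"
proof -
  define h where "h = (\<lambda>(n::nat, m::nat). (n, prod_decode m))"
  have "bij h" unfolding h_def
    by (rule bij_betw_byWitness[where f'="\<lambda>(n, j, l). (n, prod_encode (j, l))"]) auto
  moreover have "h -` B \<in> Fin2" if "B \<in> BI" for B
  proof -
    from that obtain k where k: "\<forall>i<k. {(j, l). (i, j, l) \<in> B} \<in> Fin2"
      "\<forall>i\<ge>k. finite {(j, l). (i, j, l) \<in> B}" unfolding BI_def by blast
    have "{n. infinite {m. (n, m) \<in> h -` B}} \<subseteq> {..<k}"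
    proof
      fix n assume n: "n \<in> {n. infinite {m. (n, m) \<in> h -` B}}"
      show "n \<in> {..<k}"
      proof (rule ccontr)
        assume "n \<notin> {..<k}"
        hence "k \<le> n" by simp
        hence "finite {(j, l). (n, j, l) \<in> B}" using k(2) by blast
        moreover have "{m. (n, m) \<in> h -` B} \<subseteq> prod_encode ` {(j, l). (n, j, l) \<in> B}"
        proof
          fix m assume "m \<in> {m. (n, m) \<in> h -` B}"
          hence m1: "prod_decode m \<in> {(j, l). (n, j, l) \<in> B}" unfolding h_def by (cases "prod_decode m") simp
          have m2: "m = prod_encode (prod_decode m)" by simp
          show "m \<in> prod_encode ` {(j, l). (n, j, l) \<in> B}" by (rule image_eqI[where f=prod_encode, OF m2 m1])
        qed
        ultimately have "finite {m. (n, m) \<in> h -` B}" by (metis finite_subset finite_imageI)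
        thus False using n by simp
      qed
    qed
    hence "finite {n. infinite {m. (n, m) \<in> h -` B}}" by (rule finite_subset) simp
    thus ?thesis unfolding Fin2_def by simp
  qed
  hence "\<forall>B\<in>BI. h -` B \<inter> UNIV \<in> Fin2" by simp
  ultimately show ?thesis unfolding kat_le_def Union_BI Union_Fin2 by blast
qed



lemma ideal_props:
  assumes "ideal_on X I"
  shows "infinite X" "countable X" "I \<subseteq> Pow X" "\<And>A B. A \<in> I \<Longrightarrow> B \<subseteq> A \<Longrightarrow> B \<in> I"
    "\<And>A B. A \<in> I \<Longrightarrow> B \<in> I \<Longrightarrow> A \<union> B \<in> I" "\<And>F. F \<subseteq> X \<Longrightarrow> finite F \<Longrightarrow> F \<in> I" "X \<notin> I"
  using assms unfolding ideal_on_def by simp_all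

lemma Union_ideal: "ideal_on X I \<Longrightarrow> \<Union>I = X"
proof -
  assume I: "ideal_on X I"
  have "\<Union>I \<subseteq> X" using ideal_props(3)[OF I] by blast
  moreover have "{x} \<in> I" if "x \<in> X" for x using ideal_props(6)[OF I, of "{x}"] that by simp
  ultimately show ?thesis by blast
qed

lemma ideal_sub: "ideal_on X I \<Longrightarrow> A \<in> I \<Longrightarrow> B \<subseteq> A \<Longrightarrow> B \<in> I"
  using ideal_props(4) by metis

lemma ideal_Un: "ideal_on X I \<Longrightarrow> A \<in> I \<Longrightarrow> B \<in> I \<Longrightarrow> A \<union> B \<in> I"
  using ideal_props(5) by metis

lemma ideal_empty: "ideal_on X I \<Longrightarrow> {} \<in> I"
  using ideal_props(6) by (metis empty_subsetI finite.emptyI)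

lemma ideal_UN:
  assumes I: "ideal_on X I"
  shows "finite F \<Longrightarrow> (\<forall>i\<in>F. C i \<in> I) \<Longrightarrow> (\<Union>i\<in>F. C i) \<in> I"
proof (induction F rule: finite_induct)
  case empty thus ?case using ideal_empty[OF I] by simp
next
  case (insert x F) thus ?case using ideal_Un[OF I, of "C x" "\<Union>i\<in>F. C i"] by simp
qed

lemma restr_self: "ideal_on X I \<Longrightarrow> restr I X = I"
proof -
  assume I: "ideal_on X I"
  have e: "B \<inter> X = B" if "B \<in> I" for B using ideal_props(3)[OF I] that by blast
  show ?thesis
  proof
    show "restr I X \<subseteq> I" unfolding restr_def using e by auto
    show "I \<subseteq> restr I X" unfolding restr_def using e by force
  qed
qed
lemma Union_restr: "ideal_on X I \<Longrightarrow> A \<subseteq> X \<Longrightarrow> \<Union>(restr I A) = A"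
proof -
  assume I: "ideal_on X I" and A: "A \<subseteq> X"
  have "{a} \<in> restr I A" if "a \<in> A" for a
  proof -
    have "{a} \<in> I" using ideal_props(6)[OF I, of "{a}"] A that by blast
    moreover have "{a} \<inter> A = {a}" using that by blast
    ultimately show ?thesis unfolding restr_def by blast
  qed
  moreover have "\<Union>(restr I A) \<subseteq> A" unfolding restr_def by blast
  ultimately show ?thesis by blast
qed


definition hh :: "nat \<times> nat \<times> nat \<Rightarrow> nat \<times> nat" where
  "hh = (\<lambda>(i, j, l). (i, prod_encode (j, l)))"

lemma bij_hh: "bij hh"
proof (rule bijI)
  show "inj hh" unfolding hh_def inj_def by auto
  show "surj hh" unfolding surj_def
  proof
    fix p :: "nat \<times> nat"
    obtain i m where p: "p = (i, m)" by (cases p)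
    obtain j l where "prod_decode m = (j, l)" by (cases "prod_decode m")
    hence "hh (i, j, l) = p" unfolding hh_def p by (metis case_prod_conv prod_decode_inverse)
    thus "\<exists>x. p = hh x" by metis
  qed
qed

lemma single_col_BI: "B \<in> Fin2 \<Longrightarrow> {k} \<times> B \<in> BI"
  unfolding BI_def
proof (intro CollectI exI[of _ "Suc k"] conjI allI impI)
  fix i assume "B \<in> Fin2" "i < Suc k"
  show "{(j, l). (i, j, l) \<in> {k} \<times> B} \<in> Fin2"
  proof (cases "i = k")
    case True thus ?thesis using \<open>B \<in> Fin2\<close> by simp
  next
    case False
    hence e: "{(j, l). (i, j, l) \<in> {k} \<times> B} = {}" by blast
    have "{} \<in> Fin2" unfolding Fin2_def by simp
    thus ?thesis by (subst e)
  qed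
next
  fix i assume "Suc k \<le> i"
  hence "{(j, l). (i, j, l) \<in> {k} \<times> B} = {}" by auto
  thus "finite {(j, l). (i, j, l) \<in> {k} \<times> B}" by simp
qed

lemma case1:
  assumes I: "ideal_on X I" and f: "bij_betw f X UNIV" "\<forall>A\<in>BI. f -` A \<inter> X \<in> I"
    and kC: "f -` ({k} \<times> UNIV) \<inter> X \<notin> I"
  shows "\<exists>A. A \<subseteq> X \<and> A \<notin> I \<and> kat_le Fin2 (restr I A)"
proof -
  define C where "C = f -` ({k} \<times> UNIV) \<inter> X"
  define g where "g x = snd (f x)" for x
  have CX: "C \<subseteq> X" unfolding C_def by blast
  have "inj_on g C"
  proof
    fix x y assume xy: "x \<in> C" "y \<in> C" "g x = g y"
    hence "fst (f x) = fst (f y)" unfolding C_def by auto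
    hence "f x = f y" using xy(3) unfolding g_def by (simp add: prod_eq_iff)
    thus "x = y" using f(1) xy CX unfolding bij_betw_def inj_on_def by blast
  qed
  moreover have "g ` C = UNIV"
  proof -
    have "p \<in> g ` C" for p
    proof -
      have "(k, p) \<in> f ` X" using f(1) unfolding bij_betw_def by simp
      then obtain x where "x \<in> X" "f x = (k, p)" by (metis imageE)
      hence "x \<in> C" "g x = p" unfolding C_def g_def by auto
      thus ?thesis by blast
    qed
    thus ?thesis by blast
  qed
  ultimately have gb: "bij_betw g C UNIV" unfolding bij_betw_def by blast
  have "g -` B \<inter> C \<in> restr I C" if "B \<in> Fin2" for B
  proof -
    have "f -` ({k} \<times> B) \<inter> X \<in> I" using f(2) single_col_BI[OF that] by blast
    moreover have "g -` B \<inter> C = f -` ({k} \<times> B) \<inter> X"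
      unfolding g_def C_def by (auto simp: mem_Times_iff)
    moreover have "g -` B \<inter> C = (g -` B \<inter> C) \<inter> C" by blast
    ultimately show ?thesis unfolding restr_def by (metis (mono_tags, lifting) mem_Collect_eq)
  qed
  hence "kat_le Fin2 (restr I C)"
    unfolding kat_le_def Union_restr[OF I CX] Union_Fin2 using gb by blast
  thus ?thesis using kC CX unfolding C_def by blast
qed

lemma case2:
  assumes I: "ideal_on X I" and f: "bij_betw f X UNIV" "\<forall>A\<in>BI. f -` A \<inter> X \<in> I"
    and CI: "\<And>k. f -` ({k} \<times> UNIV) \<inter> X \<in> I"
  shows "kat_le Fin2 I"
proof -
  have UI: "\<Union>I = X" using Union_ideal[OF I] .
  have "bij_betw (hh \<circ> f) X UNIV" using bij_betw_trans[OF f(1) bij_hh] .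
  moreover have "(hh \<circ> f) -` B \<inter> X \<in> I" if "B \<in> Fin2" for B
  proof -
    define F where "F = {n. infinite {m. (n, m) \<in> B}}"
    have F: "finite F" using that unfolding F_def Fin2_def by simp
    define R where "R = {(i, j, l). i \<notin> F \<and> (i, prod_encode (j, l)) \<in> B}"
    have "R \<in> BI" unfolding BI_def
    proof (intro CollectI exI[of _ 0] conjI allI impI)
      fix i :: nat
      show "finite {(j, l). (i, j, l) \<in> R}"
      proof (cases "i \<in> F")
        case True
        hence "{(j, l). (i, j, l) \<in> R} = {}" unfolding R_def by blast
        thus ?thesis by simp
      next
        case False
        hence fin: "finite {m. (i, m) \<in> B}" unfolding F_def by simp
        have "{(j, l). (i, j, l) \<in> R} \<subseteq> prod_encode -` {m. (i, m) \<in> B}"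
          unfolding R_def by auto
        thus ?thesis using finite_vimageI[OF fin inj_prod_encode] finite_subset by blast
      qed
    next
      fix i :: nat assume "i < 0" thus "{(j, l). (i, j, l) \<in> R} \<in> Fin2" by simp
    qed
    hence RI: "f -` R \<inter> X \<in> I" using f(2) by blast
    have "(hh \<circ> f) -` B \<inter> X \<subseteq> (f -` R \<inter> X) \<union> (\<Union>i\<in>F. f -` ({i} \<times> UNIV) \<inter> X)"
    proof
      fix x assume x: "x \<in> (hh \<circ> f) -` B \<inter> X"
      obtain i j l where fx: "f x = (i, j, l)" by (metis prod_cases3)
      have hx: "(i, prod_encode (j, l)) \<in> B" using x fx unfolding hh_def by simp
      show "x \<in> (f -` R \<inter> X) \<union> (\<Union>i\<in>F. f -` ({i} \<times> UNIV) \<inter> X)"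
      proof (cases "i \<in> F")
        case True thus ?thesis using x fx by auto
      next
        case False thus ?thesis using x fx hx unfolding R_def by auto
      qed
    qed
    moreover have "(f -` R \<inter> X) \<union> (\<Union>i\<in>F. f -` ({i} \<times> UNIV) \<inter> X) \<in> I"
      by (rule ideal_Un[OF I RI ideal_UN[OF I F]]) (simp add: CI)
    ultimately show ?thesis using ideal_sub[OF I] by blast
  qed
  ultimately show "kat_le Fin2 I" unfolding kat_le_def UI Union_Fin2 by blast
qed

lemma boring_not_hwp:
  assumes I: "ideal_on X I" and k: "kat_le BI I"
  shows "\<exists>A. A \<subseteq> \<Union>I \<and> A \<notin> I \<and> kat_le Fin2 (restr I A)"
proof -
  have UI: "\<Union>I = X" using Union_ideal[OF I] .
  from k obtain f where f: "bij_betw f X UNIV" "\<forall>A\<in>BI. f -` A \<inter> X \<in> I"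
    unfolding kat_le_def UI Union_BI by blast
  show ?thesis
  proof (cases "\<exists>k. f -` ({k} \<times> UNIV) \<inter> X \<notin> I")
    case True
    then obtain k where "f -` ({k} \<times> UNIV) \<inter> X \<notin> I" by blast
    from case1[OF I f this] show ?thesis unfolding UI .
  next
    case False
    hence "kat_le Fin2 I" using case2[OF I f] by blast
    moreover have "X \<notin> I" using ideal_props(7)[OF I] .
    ultimately show ?thesis using restr_self[OF I] UI by auto
  qed
qed



lemma Fin2_sub: "A \<in> Fin2 \<Longrightarrow> B \<subseteq> A \<Longrightarrow> B \<in> Fin2"
proof -
  assume "A \<in> Fin2" "B \<subseteq> A"
  have "{n. infinite {m. (n, m) \<in> B}} \<subseteq> {n. infinite {m. (n, m) \<in> A}}"
  proof
    fix n assume "n \<in> {n. infinite {m. (n, m) \<in> B}}"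
    moreover have "{m. (n, m) \<in> B} \<subseteq> {m. (n, m) \<in> A}" using \<open>B \<subseteq> A\<close> by auto
    ultimately show "n \<in> {n. infinite {m. (n, m) \<in> A}}" using finite_subset by blast
  qed
  thus ?thesis using \<open>A \<in> Fin2\<close> unfolding Fin2_def by (auto intro: finite_subset)
qed

lemma Fin2_Un: "A \<in> Fin2 \<Longrightarrow> B \<in> Fin2 \<Longrightarrow> A \<union> B \<in> Fin2"
proof -
  assume "A \<in> Fin2" "B \<in> Fin2"
  have "{n. infinite {m. (n, m) \<in> A \<union> B}} \<subseteq> {n. infinite {m. (n, m) \<in> A}} \<union> {n. infinite {m. (n, m) \<in> B}}"
  proof
    fix n assume "n \<in> {n. infinite {m. (n, m) \<in> A \<union> B}}"
    moreover have "{m. (n, m) \<in> A \<union> B} = {m. (n, m) \<in> A} \<union> {m. (n, m) \<in> B}" by auto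
    ultimately show "n \<in> {n. infinite {m. (n, m) \<in> A}} \<union> {n. infinite {m. (n, m) \<in> B}}" by auto
  qed
  thus ?thesis using \<open>A \<in> Fin2\<close> \<open>B \<in> Fin2\<close> unfolding Fin2_def by (auto intro: finite_subset)
qed

lemma finite_Fin2: "finite A \<Longrightarrow> A \<in> Fin2"
proof -
  assume "finite A"
  have "finite {m. (n, m) \<in> A}" for n
  proof -
    have "{m. (n, m) \<in> A} \<subseteq> snd ` A" by force
    thus ?thesis using \<open>finite A\<close> finite_subset by blast
  qed
  thus ?thesis unfolding Fin2_def by simp
qed

lemma BI_sub: "A \<in> BI \<Longrightarrow> B \<subseteq> A \<Longrightarrow> B \<in> BI"
proof -
  assume "A \<in> BI" "B \<subseteq> A"
  then obtain k where k: "\<forall>i<k. {(j, l). (i, j, l) \<in> A} \<in> Fin2"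
      "\<forall>i\<ge>k. finite {(j, l). (i, j, l) \<in> A}" unfolding BI_def by blast
  have s: "{(j, l). (i, j, l) \<in> B} \<subseteq> {(j, l). (i, j, l) \<in> A}" for i using \<open>B \<subseteq> A\<close> by auto
  have "\<forall>i<k. {(j, l). (i, j, l) \<in> B} \<in> Fin2" using k(1) s Fin2_sub by blast
  moreover have "\<forall>i\<ge>k. finite {(j, l). (i, j, l) \<in> B}" using k(2) s finite_subset by blast
  ultimately show ?thesis unfolding BI_def by blast
qed

lemma BI_Un: "A \<in> BI \<Longrightarrow> B \<in> BI \<Longrightarrow> A \<union> B \<in> BI"
proof -
  assume "A \<in> BI" "B \<in> BI"
  then obtain k1 k2 where k1: "\<forall>i<k1. {(j, l). (i, j, l) \<in> A} \<in> Fin2"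
      "\<forall>i\<ge>k1. finite {(j, l). (i, j, l) \<in> A}"
    and k2: "\<forall>i<k2. {(j, l). (i, j, l) \<in> B} \<in> Fin2"
      "\<forall>i\<ge>k2. finite {(j, l). (i, j, l) \<in> B}" unfolding BI_def by blast
  have u: "{(j, l). (i, j, l) \<in> A \<union> B} = {(j, l). (i, j, l) \<in> A} \<union> {(j, l). (i, j, l) \<in> B}" for i
    by auto
  have "\<forall>i<max k1 k2. {(j, l). (i, j, l) \<in> A \<union> B} \<in> Fin2"
  proof (intro allI impI)
    fix i assume "i < max k1 k2"
    have "{(j, l). (i, j, l) \<in> A} \<in> Fin2"
      using k1 finite_Fin2 by (cases "i < k1") auto
    moreover have "{(j, l). (i, j, l) \<in> B} \<in> Fin2"
      using k2 finite_Fin2 by (cases "i < k2") auto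
    ultimately show "{(j, l). (i, j, l) \<in> A \<union> B} \<in> Fin2" unfolding u by (rule Fin2_Un)
  qed
  moreover have "\<forall>i\<ge>max k1 k2. finite {(j, l). (i, j, l) \<in> A \<union> B}"
    unfolding u using k1 k2 by auto
  ultimately show ?thesis unfolding BI_def by blast
qed

lemma slice_BI: "{(j, l). (i, j, l) \<in> B} \<in> Fin2 \<Longrightarrow> B \<subseteq> {i} \<times> UNIV \<Longrightarrow> B \<in> BI"
proof -
  assume a: "{(j, l). (i, j, l) \<in> B} \<in> Fin2" and b: "B \<subseteq> {i} \<times> UNIV"
  have e: "{(j, l). (i', j, l) \<in> B} = {}" if "i' \<noteq> i" for i' using b that by auto
  have "{} \<in> Fin2" by (simp add: finite_Fin2)
  have "{(j, l). (i', j, l) \<in> B} \<in> Fin2" for i'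
  proof (cases "i' = i")
    case True thus ?thesis using a by simp
  next
    case False show ?thesis by (subst e[OF False]) (rule \<open>{} \<in> Fin2\<close>)
  qed
  hence "\<forall>i'<Suc i. {(j, l). (i', j, l) \<in> B} \<in> Fin2" by blast
  moreover have "\<forall>i'\<ge>Suc i. finite {(j, l). (i', j, l) \<in> B}" using e by simp
  ultimately show ?thesis unfolding BI_def by blast
qed

lemma infinite_sub_BI:
  assumes D: "infinite D"
  shows "\<exists>B. B \<subseteq> D \<and> infinite B \<and> B \<in> BI"
proof (cases "\<forall>i. finite {(j, l). (i, j, l) \<in> D}")
  case True
  hence "D \<in> BI" unfolding BI_def by blast
  thus ?thesis using D by blast
next
  case False
  then obtain i where Di: "infinite {(j, l). (i, j, l) \<in> D}" by blast
  show ?thesis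
  proof (cases "\<exists>j. infinite {l. (i, j, l) \<in> D}")
    case True
    then obtain j where Dj: "infinite {l. (i, j, l) \<in> D}" by blast
    define B where "B = D \<inter> ({i} \<times> {j} \<times> UNIV)"
    have "(\<lambda>l. (i, j, l)) ` {l. (i, j, l) \<in> D} \<subseteq> B" unfolding B_def by auto
    moreover have inj1: "inj_on (\<lambda>l. (i, j, l)) {l. (i, j, l) \<in> D}" by (simp add: inj_on_def)
    have "infinite ((\<lambda>l. (i, j, l)) ` {l. (i, j, l) \<in> D})"
      using Dj finite_imageD[OF _ inj1] by blast
    ultimately have Binf: "infinite B" using finite_subset by blast
    have "{n. infinite {m. (n, m) \<in> {(j', l). (i, j', l) \<in> B}}} \<subseteq> {j}"
      unfolding B_def by auto
    hence "{(j', l). (i, j', l) \<in> B} \<in> Fin2" unfolding Fin2_def by (auto intro: finite_subset)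
    hence "B \<in> BI" by (rule slice_BI) (auto simp: B_def)
    thus ?thesis using Binf unfolding B_def by blast
  next
    case False
    define B where "B = D \<inter> ({i} \<times> UNIV)"
    have "(\<lambda>(j, l). (i, j, l)) ` {(j, l). (i, j, l) \<in> D} \<subseteq> B" unfolding B_def by auto
    moreover have inj2: "inj_on (\<lambda>(j::nat, l::nat). (i, j, l)) {(j, l). (i, j, l) \<in> D}"
      unfolding inj_on_def by auto
    have "infinite ((\<lambda>(j, l). (i, j, l)) ` {(j, l). (i, j, l) \<in> D})"
      using Di finite_imageD[OF _ inj2] by blast
    ultimately have Binf: "infinite B" using finite_subset by blast
    have "{(j', l). (i, j', l) \<in> B} \<in> Fin2" unfolding Fin2_def B_def using False by auto
    hence "B \<in> BI" by (rule slice_BI) (auto simp: B_def)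
    thus ?thesis using Binf unfolding B_def by blast
  qed
qed



lemma not_Fin2_BI: "\<not> kat_le Fin2 BI"
proof
  assume "kat_le Fin2 BI"
  then obtain f :: "nat \<times> nat \<times> nat \<Rightarrow> nat \<times> nat" where
    f: "bij f" "\<And>B. B \<in> Fin2 \<Longrightarrow> f -` B \<in> BI"
    unfolding kat_le_def Union_BI Union_Fin2 by auto
  define N where "N i = {n. \<exists>j l m. f (i, j, l) = (n, m)}" for i
  have Ninf: "infinite (N i)" for i
  proof
    assume fin: "finite (N i)"
    define B where "B = N i \<times> (UNIV :: nat set)"
    have "{n. infinite {m. (n, m) \<in> B}} \<subseteq> N i" unfolding B_def by auto
    hence "B \<in> Fin2" unfolding Fin2_def using fin finite_subset by blast
    hence "f -` B \<in> BI" by (rule f(2))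
    then obtain k where k: "\<forall>i<k. {(j, l). (i, j, l) \<in> f -` B} \<in> Fin2"
      "\<forall>i\<ge>k. finite {(j, l). (i, j, l) \<in> f -` B}" unfolding BI_def by blast
    have "{(j, l). (i, j, l) \<in> f -` B} = UNIV"
    proof -
      have "(i, j, l) \<in> f -` B" for j l
      proof -
        obtain n m where "f (i, j, l) = (n, m)" by (cases "f (i, j, l)")
        thus ?thesis unfolding B_def N_def by auto
      qed
      thus ?thesis by auto
    qed
    moreover have "(UNIV :: (nat \<times> nat) set) \<notin> Fin2" by (rule UNIV_not_Fin2)
    moreover have "infinite (UNIV :: (nat \<times> nat) set)" by (rule infinite_UNIV_nn)
    ultimately show False using k by (metis not_le)
  qed
  define mm where "mm i n = (LEAST m. \<exists>j l. f (i, j, l) = (n, m))" for i n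
  define T where "T = {(n, m). \<exists>i\<le>n. n \<in> N i \<and> m = mm i n}"
  have "T \<in> Fin2"
  proof -
    have "finite {m. (n, m) \<in> T}" for n
    proof -
      have "{m. (n, m) \<in> T} \<subseteq> (\<lambda>i. mm i n) ` {..n}" unfolding T_def by auto
      thus ?thesis using finite_subset by blast
    qed
    thus ?thesis unfolding Fin2_def by simp
  qed
  hence "f -` T \<in> BI" by (rule f(2))
  then obtain k where k: "\<forall>i\<ge>k. finite {(j, l). (i, j, l) \<in> f -` T}" unfolding BI_def by blast
  define S where "S = {(j, l). (k, j, l) \<in> f -` T}"
  have Sfin: "finite S" using k unfolding S_def by blast
  have "N k \<inter> {k..} \<subseteq> (\<lambda>(j, l). fst (f (k, j, l))) ` S"
  proof
    fix n assume n: "n \<in> N k \<inter> {k..}"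
    then obtain j0 l0 m0 where "f (k, j0, l0) = (n, m0)" unfolding N_def by blast
    hence "\<exists>j l. f (k, j, l) = (n, m0)" by blast
    hence "\<exists>j l. f (k, j, l) = (n, mm k n)" unfolding mm_def by (rule LeastI)
    then obtain j l where jl: "f (k, j, l) = (n, mm k n)" by blast
    have "(n, mm k n) \<in> T" unfolding T_def using n by auto
    hence "(j, l) \<in> S" unfolding S_def using jl by simp
    moreover have "n = (\<lambda>(j, l). fst (f (k, j, l))) (j, l)" using jl by simp
    ultimately show "n \<in> (\<lambda>(j, l). fst (f (k, j, l))) ` S" by blast
  qed
  hence "finite (N k \<inter> {k..})" using Sfin finite_subset by blast
  moreover have "N k \<subseteq> {..<k} \<union> (N k \<inter> {k..})" by auto
  ultimately have "finite (N k)" using finite_subset by blast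
  thus False using Ninf by blast
qed



definition enc3 :: "nat \<times> nat \<times> nat \<Rightarrow> nat" where
  "enc3 = (\<lambda>(i, j, l). prod_encode (i, prod_encode (j, l)))"

definition dec3 :: "nat \<Rightarrow> nat \<times> nat \<times> nat" where
  "dec3 n = (fst (prod_decode n), prod_decode (snd (prod_decode n)))"

lemma dec_enc3: "dec3 (enc3 x) = x"
  unfolding dec3_def enc3_def by (cases x) auto

lemma enc_dec3: "enc3 (dec3 n) = n"
  unfolding dec3_def enc3_def by simp

lemma bij_enc3: "bij enc3"
  by (rule bij_betw_byWitness[where f'=dec3]) (auto simp: dec_enc3 enc_dec3)

lemma bij_dec3: "bij dec3"
  by (rule bij_betw_byWitness[where f'=enc3]) (auto simp: dec_enc3 enc_dec3)

definition I2 :: "nat set set" where "I2 = {A. enc3 -` A \<in> BI}"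

lemma ideal_I2: "ideal_on UNIV I2"
  unfolding ideal_on_def
proof (intro conjI ballI allI impI)
  show "infinite (UNIV :: nat set)" by simp
  show "countable (UNIV :: nat set)" by simp
  show "I2 \<subseteq> Pow UNIV" by simp
  fix A B assume "A \<in> I2" "B \<subseteq> A"
  moreover have "enc3 -` B \<subseteq> enc3 -` A" using \<open>B \<subseteq> A\<close> by (rule vimage_mono)
  ultimately show "B \<in> I2" unfolding I2_def using BI_sub by simp
next
  fix A B assume "A \<in> I2" "B \<in> I2"
  thus "A \<union> B \<in> I2" unfolding I2_def using BI_Un by (simp add: vimage_Un)
next
  fix F :: "nat set" assume "F \<subseteq> UNIV \<and> finite F"
  hence "finite (enc3 -` F)" using finite_vimageI bij_enc3 bij_is_inj by blast
  thus "F \<in> I2" unfolding I2_def by (simp add: finite_in_BI)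
next
  show "UNIV \<notin> I2" unfolding I2_def using UNIV_not_BI by simp
qed

lemma boring_I2: "boring I2"
  unfolding boring_def kat_le_def Union_BI Union_ideal[OF ideal_I2]
proof (intro exI conjI ballI)
  show "bij_betw dec3 UNIV UNIV" using bij_dec3 by simp
  fix A assume "A \<in> BI"
  moreover have "enc3 -` (dec3 -` A \<inter> UNIV) = A" by (auto simp: dec_enc3)
  ultimately show "dec3 -` A \<inter> UNIV \<in> I2" unfolding I2_def by simp
qed

lemma weakP_I2: "weak_P I2"
  unfolding weak_P_def
proof
  assume a: "kat_le Fin2 I2"
  have "kat_le I2 BI" unfolding kat_le_def Union_BI Union_ideal[OF ideal_I2]
    using bij_enc3 by (intro exI[of _ enc3]) (auto simp: I2_def)
  hence "kat_le Fin2 BI" using kat_trans[OF a] by blast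
  thus False using not_Fin2_BI by blast
qed

definition Ev :: "nat \<times> nat \<Rightarrow> nat" where "Ev x = 2 * prod_encode x"
definition Od :: "nat \<Rightarrow> nat" where "Od k = 2 * k + 1"

definition I1 :: "nat set set" where "I1 = {A. Ev -` A \<in> Fin2 \<and> finite (Od -` A)}"

lemma inj_Ev: "inj Ev" unfolding inj_def Ev_def by simp
lemma inj_Od: "inj Od" unfolding inj_def Od_def by simp

lemma ideal_I1: "ideal_on UNIV I1"
  unfolding ideal_on_def
proof (intro conjI ballI allI impI)
  show "infinite (UNIV :: nat set)" by simp
  show "countable (UNIV :: nat set)" by simp
  show "I1 \<subseteq> Pow UNIV" by simp
  fix A B assume "A \<in> I1" "B \<subseteq> A"
  moreover have "Ev -` B \<subseteq> Ev -` A" "Od -` B \<subseteq> Od -` A" using \<open>B \<subseteq> A\<close> by auto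
  ultimately show "B \<in> I1" unfolding I1_def using Fin2_sub[of "Ev -` A" "Ev -` B"] finite_subset[of "Od -` B" "Od -` A"] by simp
next
  fix A B assume "A \<in> I1" "B \<in> I1"
  thus "A \<union> B \<in> I1" unfolding I1_def using Fin2_Un by (simp add: vimage_Un)
next
  fix F :: "nat set" assume "F \<subseteq> UNIV \<and> finite F"
  hence "finite (Ev -` F)" "finite (Od -` F)" using finite_vimageI inj_Ev inj_Od by blast+
  thus "F \<in> I1" unfolding I1_def by (simp add: finite_Fin2)
next
  have "Ev -` UNIV = UNIV" by simp
  thus "UNIV \<notin> I1" unfolding I1_def using UNIV_not_Fin2 by simp
qed

lemma not_hwp_I1: "\<not> hereditary_weak_P I1"
  unfolding hereditary_weak_P_def
proof
  assume H: "\<forall>A. A \<subseteq> \<Union>I1 \<and> A \<notin> I1 \<longrightarrow> \<not> kat_le Fin2 (restr I1 A)"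
  have "Ev -` range Ev = UNIV" by auto
  hence "range Ev \<notin> I1" unfolding I1_def using UNIV_not_Fin2 by simp
  hence "range Ev \<subseteq> \<Union>I1 \<and> range Ev \<notin> I1" using Union_ideal[OF ideal_I1] by simp
  hence "\<not> kat_le Fin2 (restr I1 (range Ev))" using H by blast
  moreover have "kat_le Fin2 (restr I1 (range Ev))"
    unfolding kat_le_def Union_restr[OF ideal_I1 subset_UNIV] Union_Fin2
  proof (intro exI conjI ballI)
    define g where "g y = prod_decode (y div 2)" for y
    have gE: "g (Ev x) = x" for x unfolding g_def Ev_def by simp
    show "bij_betw g (range Ev) UNIV"
      by (rule bij_betw_byWitness[where f' = Ev]) (auto simp: gE)
    fix B assume B: "B \<in> Fin2"
    have eq: "g -` B \<inter> range Ev = Ev ` B" by (auto simp: gE)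
    have "Ev -` (Ev ` B) = B" using inj_Ev by (simp add: inj_vimage_image_eq)
    moreover have "Od -` (Ev ` B) = {}"
    proof -
      have "Od k \<noteq> Ev x" for k x unfolding Od_def Ev_def by presburger
      thus ?thesis by blast
    qed
    ultimately have "Ev ` B \<in> I1" unfolding I1_def using B by simp
    moreover have "Ev ` B = Ev ` B \<inter> range Ev" by auto
    ultimately show "g -` B \<inter> range Ev \<in> restr I1 (range Ev)" unfolding eq restr_def by blast
  qed
  ultimately show False by blast
qed

lemma unboring_I1: "unboring I1"
  unfolding unboring_def boring_def kat_le_def Union_BI Union_ideal[OF ideal_I1]
proof
  assume "\<exists>f. bij_betw f UNIV UNIV \<and> (\<forall>A\<in>BI. f -` A \<inter> UNIV \<in> I1)"
  then obtain f :: "nat \<Rightarrow> nat \<times> nat \<times> nat" where f: "bij f" "\<And>A. A \<in> BI \<Longrightarrow> f -` A \<in> I1"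
    by auto
  have injfo: "inj (f \<circ> Od)" using f(1) inj_Od by (simp add: bij_is_inj inj_compose)
  have "infinite (range (f \<circ> Od))"
  proof
    assume "finite (range (f \<circ> Od))"
    hence "finite (UNIV :: nat set)" using finite_imageD[OF _ injfo] by blast
    thus False by simp
  qed
  then obtain B where B: "B \<subseteq> range (f \<circ> Od)" "infinite B" "B \<in> BI"
    using infinite_sub_BI by blast
  have "finite (Od -` (f -` B))" using f(2)[OF B(3)] unfolding I1_def by simp
  moreover have "(f \<circ> Od) ` (Od -` (f -` B)) = B" using B(1) by auto
  ultimately have "finite B" using finite_imageI[of "Od -` (f -` B)" "f \<circ> Od"] by simp
  thus False using B(2) by blast
qed

lemma part_a:
  assumes I: "ideal_on X I"
  shows "(hereditary_weak_P I \<longrightarrow> unboring I) \<and> (unboring I \<longrightarrow> weak_P I)"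
proof (intro conjI impI)
  assume h: "hereditary_weak_P I"
  show "unboring I" unfolding unboring_def boring_def
  proof
    assume "kat_le BI I"
    from boring_not_hwp[OF I this] h show False unfolding hereditary_weak_P_def by blast
  qed
next
  assume u: "unboring I"
  show "weak_P I" unfolding weak_P_def
  proof
    assume "kat_le Fin2 I"
    hence "kat_le BI I" by (rule kat_trans[OF BI_Fin2])
    thus False using u unfolding unboring_def boring_def by blast
  qed
qed

lemma part_c:
  assumes I: "ideal_on X I" and J: "ideal_on X J" and IJ: "I \<subseteq> J" and u: "unboring J"
  shows "unboring I"
  unfolding unboring_def boring_def
proof
  assume "kat_le BI I"
  hence "kat_le BI J" using kat_mono[OF _ IJ] Union_ideal[OF I] Union_ideal[OF J] by simp
  thus False using u unfolding unboring_def boring_def by blast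
qed

theorem proposition4p10:
  shows
    "(\<forall>(X :: 'a set) I. ideal_on X I \<longrightarrow>
        (hereditary_weak_P I \<longrightarrow> unboring I) \<and> (unboring I \<longrightarrow> weak_P I))
   \<and> (\<exists>(X :: nat set) I. ideal_on X I \<and> unboring I \<and> \<not> hereditary_weak_P I)
   \<and> (\<exists>(X :: nat set) I. ideal_on X I \<and> weak_P I \<and> boring I)
   \<and> (\<forall>(X :: 'b set) I. ideal_on X I \<longrightarrow>
        ((\<exists>J. ideal_on X J \<and> I \<subseteq> J \<and> unboring J) \<longrightarrow> unboring I)
      \<and> ((\<exists>J. ideal_on X J \<and> I \<subseteq> J \<and> hereditary_weak_P J) \<longrightarrow> unboring I))"
proof (intro conjI allI impI)
  fix X :: "'a set" and I assume "ideal_on X I"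
  from part_a[OF this] show "hereditary_weak_P I \<Longrightarrow> unboring I" "unboring I \<Longrightarrow> weak_P I" by blast+
next
  show "\<exists>(X :: nat set) I. ideal_on X I \<and> unboring I \<and> \<not> hereditary_weak_P I"
    using ideal_I1 unboring_I1 not_hwp_I1 by blast
next
  show "\<exists>(X :: nat set) I. ideal_on X I \<and> weak_P I \<and> boring I"
    using ideal_I2 weakP_I2 boring_I2 by blast
next
  fix X :: "'b set" and I assume I: "ideal_on X I"
  {
    assume "\<exists>J. ideal_on X J \<and> I \<subseteq> J \<and> unboring J"
    then obtain J where "ideal_on X J" "I \<subseteq> J" "unboring J" by blast
    thus "unboring I" using part_c[OF I] by blast
  next
    assume "\<exists>J. ideal_on X J \<and> I \<subseteq> J \<and> hereditary_weak_P J"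
    then obtain J where J: "ideal_on X J" "I \<subseteq> J" "hereditary_weak_P J" by blast
    hence "unboring J" using part_a[OF J(1)] by blast
    thus "unboring I" using part_c[OF I J(1) J(2)] by blast
  }
qed

end
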